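(* For any hypothesis class $\mathcal{H}\subseteq\{0,1\}^{\mathcal{X}}$ and time horizon $T$, $$\inf_{\mathcal{A}}\operatorname{M}_{\mathcal{A}}(T,\mathcal{H}) \ge \frac{1}{8}\sup_{w\in\mathbb{N}}\sqrt{\min\{w,\operatorname{L}(\mathcal{H}),T\}\,\min\{\operatorname{AL}_w(\mathcal{H}),T\}},$$ where the infimum is over all (possibly randomized) online learners operating under apple tasting feedback.
   Context: Online binary classification: over rounds $t=1,\dots,T$, an adversary picks $(x_t,y_t)\in\mathcal{X}\times\{0,1\}$ and reveals $x_t$; the learner $\mathcal{A}$ (possibly randomized) outputs $\hat y_t=\mathcal{A}(x_t)\in\{0,1\}$ based on the history; under apple tasting feedback the learner observes $y_t$ only if $\hat y_t=1$. $\operatorname{M}_{\mathcal{A}}(T,\mathcal{H}) := \sup_{h\in\mathcal{H}}\sup_{x_1,\dots,x_T}\mathbb{E}\bigl[\sum_{t=1}^T \mathbb{1}\{\mathcal{A}(x_t)\neq h(x_t)\}\bigr]$ (labels $y_t=h(x_t)$, expectation over the learner's randomness). AL tree of width $w\in\mathbb{N}=\{1,2,\dots\}$ and depth $d$: a binary string $u$ is an internal node if $|u|<d$ and $u$ has fewer than $w$ ones; the tree assigns $x_u\in\mathcal{X}$ to each internal node. A path is a binary string $\sigma$ whose proper prefixes are all internal nodes but which is not itself one. The tree is shattered by $\mathcal{H}$ if for every path $\sigma$ some $h\in\mathcal{H}$ satisfies $h(x_{(\sigma_1,\dots,\sigma_{i-1})})=\sigma_i$ for all $i\le|\sigma|$.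 When $w\ge d$ it is a complete binary (Littlestone) tree. $\operatorname{L}(\mathcal{H})$ is the largest $d$ such that a complete binary tree of depth $d$ is shattered ($\infty$ if unbounded). $\operatorname{AL}_w(\mathcal{H})$ is the largest $d$ such that an AL tree of width $w$ and depth $d$ is shattered ($\infty$ if unbounded, $0$ if none). *)

theory Defs
  imports Complex_Main "HOL-Library.Extended_Nat"
begin

(* Labels {0,1} are rendered as bool (True = 1). Hypotheses: 'a \<Rightarrow> bool. *)

(* History of the interaction under apple tasting feedback:
   each past round records (x_s, own prediction yhat_s, feedback),
   where feedback = Some y_s if yhat_s = True and None otherwise. *)
type_synonym 'a history = "('a \<times> bool \<times> bool option) list"

(* A (possibly randomized) learner in behavioural form: given the history
   and the current instance, the probability of predicting 1. *)
type_synonym 'a learner = "'a history \<Rightarrow> 'a \<Rightarrow> real"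

definition valid_learner :: "'a learner \<Rightarrow> bool" where
  "valid_learner A \<longleftrightarrow> (\<forall>hist x. 0 \<le> A hist x \<and> A hist x \<le> 1)"

fun exp_mistakes :: "'a learner \<Rightarrow> ('a \<Rightarrow> bool) \<Rightarrow> 'a list \<Rightarrow> 'a history \<Rightarrow> real" where
  "exp_mistakes A h [] hist = 0"
| "exp_mistakes A h (x # xs) hist =
     A hist x * ((if h x then 0 else 1) + exp_mistakes A h xs (hist @ [(x, True, Some (h x))]))
   + (1 - A hist x) * ((if h x then 1 else 0) + exp_mistakes A h xs (hist @ [(x, False, None)]))"

(* The 0 is inserted only to fix the convention sup of the empty set = 0 (H = {});
   all mistake counts are nonnegative, so this changes nothing otherwise. *)
definition mistake_bound :: "'a learner \<Rightarrow> nat \<Rightarrow> ('a \<Rightarrow> bool) set \<Rightarrow> real" where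
  "mistake_bound A T H = Sup (insert 0 {exp_mistakes A h xs [] | h xs. h \<in> H \<and> length xs = T})"

(* Binary strings are bool lists (True = 1). *)
definition al_internal :: "nat \<Rightarrow> nat \<Rightarrow> bool list \<Rightarrow> bool" where
  "al_internal w d u \<longleftrightarrow> length u < d \<and> length (filter id u) < w"

definition complete_internal :: "nat \<Rightarrow> bool list \<Rightarrow> bool" where
  "complete_internal d u \<longleftrightarrow> length u < d"

definition is_path :: "(bool list \<Rightarrow> bool) \<Rightarrow> bool list \<Rightarrow> bool" where
  "is_path internal \<sigma> \<longleftrightarrow> (\<forall>i < length \<sigma>. internal (take i \<sigma>)) \<and> \<not> internal \<sigma>"

definition tree_shattered :: "('a \<Rightarrow> bool) set \<Rightarrow> (bool list \<Rightarrow> bool) \<Rightarrow> (bool list \<Rightarrow> 'a) \<Rightarrow> bool" where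
  "tree_shattered H internal xt \<longleftrightarrow>
     (\<forall>\<sigma>. is_path internal \<sigma> \<longrightarrow>
        (\<exists>h\<in>H. \<forall>i < length \<sigma>. h (xt (take i \<sigma>)) = \<sigma> ! i))"

(* Sup in enat: Sup {} = 0, Sup of an unbounded set = \<infinity>. *)
definition littlestone_dim :: "('a \<Rightarrow> bool) set \<Rightarrow> enat" where
  "littlestone_dim H = Sup {enat d | d. \<exists>xt. tree_shattered H (complete_internal d) xt}"

definition AL_dim :: "nat \<Rightarrow> ('a \<Rightarrow> bool) set \<Rightarrow> enat" where
  "AL_dim w H = Sup {enat d | d. \<exists>xt. tree_shattered H (al_internal w d) xt}"

end

theory Submission
  imports Defs
begin

fun em :: "'a learner \<Rightarrow> ('a \<times> bool) list \<Rightarrow> 'a history \<Rightarrow> real" where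
  "em A [] hist = 0"
| "em A ((x,y) # zs) hist =
     A hist x * ((if y then 0 else 1) + em A zs (hist @ [(x, True, Some y)]))
   + (1 - A hist x) * ((if y then 1 else 0) + em A zs (hist @ [(x, False, None)]))"

lemma exp_em: "exp_mistakes A h xs hist = em A (map (\<lambda>x. (x, h x)) xs) hist"
  by (induction xs arbitrary: hist) auto

lemma validD: "valid_learner A \<Longrightarrow> 0 \<le> A hist x \<and> A hist x \<le> 1"
  unfolding valid_learner_def by blast

lemma em_nonneg: "valid_learner A \<Longrightarrow> 0 \<le> em A zs hist"
proof (induction zs arbitrary: hist)
  case Nil then show ?case by simp
next
  case (Cons p zs)
  obtain x y where p: "p = (x,y)" by (cases p)
  from validD[OF Cons.prems, of hist x] have "0 \<le> A hist x" "A hist x \<le> 1" by auto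
  moreover have "0 \<le> em A zs (hist @ [(x, True, Some y)])" "0 \<le> em A zs (hist @ [(x, False, None)])"
    using Cons by auto
  ultimately show ?case unfolding p by (simp add: add_nonneg_nonneg mult_nonneg_nonneg)
qed

lemma em_le: "valid_learner A \<Longrightarrow> em A zs hist \<le> real (length zs)"
proof (induction zs arbitrary: hist)
  case Nil then show ?case by simp
next
  case (Cons p zs)
  obtain x y where p: "p = (x,y)" by (cases p)
  from validD[OF Cons.prems, of hist x] have a: "0 \<le> A hist x" "A hist x \<le> 1" by auto
  have e1: "em A zs (hist @ [(x, True, Some y)]) \<le> length zs" and e2: "em A zs (hist @ [(x, False, None)]) \<le> length zs"
    using Cons by auto
  have "A hist x * ((if y then 0 else 1) + em A zs (hist @ [(x, True, Some y)])) \<le> A hist x * (1 + length zs)"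
    using a e1 by (intro mult_left_mono) auto
  moreover have "(1 - A hist x) * ((if y then 1 else 0) + em A zs (hist @ [(x, False, None)])) \<le> (1 - A hist x) * (1 + length zs)"
    using a e2 by (intro mult_left_mono) auto
  ultimately show ?case unfolding p by (simp add: algebra_simps)
qed

lemma em_append_ge: "valid_learner A \<Longrightarrow> em A zs hist \<le> em A (zs @ zs2) hist"
proof (induction zs arbitrary: hist)
  case Nil then show ?case using em_nonneg by simp
next
  case (Cons p zs)
  obtain x y where p: "p = (x,y)" by (cases p)
  from validD[OF Cons.prems, of hist x] have a: "0 \<le> A hist x" "A hist x \<le> 1" by auto
  have e1: "em A zs (hist @ [(x, True, Some y)]) \<le> em A (zs @ zs2) (hist @ [(x, True, Some y)])"
   and e2: "em A zs (hist @ [(x, False, None)]) \<le> em A (zs @ zs2) (hist @ [(x, False, None)])"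
    using Cons by auto
  have "A hist x * ((if y then 0 else 1) + em A zs (hist @ [(x, True, Some y)])) \<le> A hist x * ((if y then 0 else 1) + em A (zs @ zs2) (hist @ [(x, True, Some y)]))"
    using a e1 by (intro mult_left_mono) auto
  moreover have "(1 - A hist x) * ((if y then 1 else 0) + em A zs (hist @ [(x, False, None)])) \<le> (1 - A hist x) * ((if y then 1 else 0) + em A (zs @ zs2) (hist @ [(x, False, None)]))"
    using a e2 by (intro mult_left_mono) auto
  ultimately show ?case unfolding p by simp
qed

definition stp :: "'a learner \<Rightarrow> 'a \<Rightarrow> bool \<Rightarrow> (real \<times> 'a history) list \<Rightarrow> (real \<times> 'a history) list" where
  "stp A x y mu = concat (map (\<lambda>(w,hist). [(w * A hist x, hist @ [(x, True, Some y)]),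
        (w * (1 - A hist x), hist @ [(x, False, None)])]) mu)"

fun run :: "'a learner \<Rightarrow> ('a \<times> bool) list \<Rightarrow> (real \<times> 'a history) list \<Rightarrow> (real \<times> 'a history) list" where
  "run A [] mu = mu"
| "run A ((x,y) # zs) mu = run A zs (stp A x y mu)"

definition cost :: "'a learner \<Rightarrow> ('a \<times> bool) list \<Rightarrow> (real \<times> 'a history) list \<Rightarrow> real" where
  "cost A zs mu = sum_list (map (\<lambda>(w,hist). w * em A zs hist) mu)"

definition wt :: "(real \<times> 'a history) list \<Rightarrow> real" where
  "wt mu = sum_list (map fst mu)"

definition nn :: "(real \<times> 'a history) list \<Rightarrow> bool" where
  "nn mu \<longleftrightarrow> (\<forall>p\<in>set mu. 0 \<le> fst p)"

lemma cost_Nil[simp]: "cost A [] mu = 0"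
  unfolding cost_def by (induction mu) auto

lemma cost_Cons: "cost A ((x,y) # zs) mu =
   sum_list (map (\<lambda>(w,hist). w * (A hist x * (if y then 0 else 1) + (1 - A hist x) * (if y then 1 else 0))) mu)
   + cost A zs (stp A x y mu)"
  unfolding cost_def stp_def by (induction mu) (auto simp: algebra_simps)

lemma cost_append: "cost A (zs1 @ zs2) mu = cost A zs1 mu + cost A zs2 (run A zs1 mu)"
proof (induction zs1 arbitrary: mu)
  case Nil then show ?case by simp
next
  case (Cons p zs)
  obtain x y where p: "p = (x,y)" by (cases p)
  show ?case unfolding p using Cons by (simp add: cost_Cons)
qed

lemma wt_stp: "wt (stp A x y mu) = wt mu"
  unfolding wt_def stp_def by (induction mu) (auto simp: algebra_simps)

lemma wt_run: "wt (run A zs mu) = wt mu"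
proof (induction zs arbitrary: mu)
  case Nil then show ?case by simp
next
  case (Cons p zs)
  obtain x y where p: "p = (x,y)" by (cases p)
  show ?case unfolding p using Cons by (simp add: wt_stp)
qed

lemma nn_stp: "valid_learner A \<Longrightarrow> nn mu \<Longrightarrow> nn (stp A x y mu)"
  unfolding nn_def stp_def using validD[of A] by (auto simp: mult_nonneg_nonneg)

lemma nn_run: "valid_learner A \<Longrightarrow> nn mu \<Longrightarrow> nn (run A zs mu)"
proof (induction zs arbitrary: mu)
  case Nil then show ?case by simp
next
  case (Cons p zs)
  obtain x y where p: "p = (x,y)" by (cases p)
  have "nn (stp A x y mu)" by (rule nn_stp[OF Cons.prems])
  then show ?case unfolding p using Cons.IH Cons.prems by simp
qed

lemma cost_nonneg: "valid_learner A \<Longrightarrow> nn mu \<Longrightarrow> 0 \<le> cost A zs mu"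
  unfolding cost_def nn_def
  by (induction mu) (auto intro!: add_nonneg_nonneg mult_nonneg_nonneg em_nonneg)

fun sil :: "'a learner \<Rightarrow> 'a \<Rightarrow> nat \<Rightarrow> 'a history \<Rightarrow> real" where
  "sil A x 0 hist = 1"
| "sil A x (Suc n) hist = (1 - A hist x) * sil A x n (hist @ [(x, False, None)])"

lemma sil_bounds: "valid_learner A \<Longrightarrow> 0 \<le> sil A x n hist \<and> sil A x n hist \<le> 1"
proof (induction n arbitrary: hist)
  case 0 then show ?case by simp
next
  case (Suc n)
  from validD[OF Suc.prems, of hist x] have a: "0 \<le> A hist x" "A hist x \<le> 1" by auto
  have s: "0 \<le> sil A x n (hist @ [(x, False, None)])" "sil A x n (hist @ [(x, False, None)]) \<le> 1"
    using Suc by auto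
  have "(1 - A hist x) * sil A x n (hist @ [(x, False, None)]) \<le> 1 * 1"
    using a s by (intro mult_mono) auto
  then show ?case using a s by simp
qed

lemma em_blk0: "valid_learner A \<Longrightarrow> 1 - sil A x n hist \<le> em A (replicate n (x, False)) hist"
proof (induction n arbitrary: hist)
  case 0 then show ?case by simp
next
  case (Suc n)
  from validD[OF Suc.prems, of hist x] have a: "0 \<le> A hist x" "A hist x \<le> 1" by auto
  have i: "1 - sil A x n (hist @ [(x, False, None)]) \<le> em A (replicate n (x, False)) (hist @ [(x, False, None)])"
    using Suc by auto
  have "0 \<le> em A (replicate n (x, False)) (hist @ [(x, True, Some False)])"
    using em_nonneg Suc.prems by blast
  moreover have "(1 - A hist x) * (1 - sil A x n (hist @ [(x, False, None)])) \<le> (1 - A hist x) * em A (replicate n (x, False)) (hist @ [(x, False, None)])"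
    using a i by (intro mult_left_mono) auto
  ultimately show ?case using a by (simp add: algebra_simps) (smt (verit) mult_nonneg_nonneg)
qed

lemma em_blk1: "valid_learner A \<Longrightarrow> real n * sil A x n hist \<le> em A (replicate n (x, True)) hist"
proof (induction n arbitrary: hist)
  case 0 then show ?case by simp
next
  case (Suc n)
  from validD[OF Suc.prems, of hist x] have a: "0 \<le> A hist x" "A hist x \<le> 1" by auto
  define s where "s = sil A x n (hist @ [(x, False, None)])"
  have sb: "0 \<le> s" "s \<le> 1" using sil_bounds[OF Suc.prems] unfolding s_def by auto
  have i: "real n * s \<le> em A (replicate n (x, True)) (hist @ [(x, False, None)])"
    using Suc unfolding s_def by auto
  have "0 \<le> em A (replicate n (x, True)) (hist @ [(x, True, Some True)])"
    using em_nonneg Suc.prems by blast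
  moreover have "(1 - A hist x) * (1 + real n * s) \<le> (1 - A hist x) * (1 + em A (replicate n (x, True)) (hist @ [(x, False, None)]))"
    using a i by (intro mult_left_mono) auto
  moreover have "(1 - A hist x) * (real (Suc n) * s) \<le> (1 - A hist x) * (1 + real n * s)"
    using a sb by (intro mult_left_mono) (auto simp: algebra_simps)
  ultimately have "(1 - A hist x) * (real (Suc n) * s) \<le> A hist x * (0 + em A (replicate n (x, True)) (hist @ [(x, True, Some True)])) + (1 - A hist x) * (1 + em A (replicate n (x, True)) (hist @ [(x, False, None)]))"
    using a by (smt (verit) mult_nonneg_nonneg)
  then show ?case unfolding s_def by (simp add: algebra_simps)
qed

definition tt :: "'a learner \<Rightarrow> 'a \<Rightarrow> nat \<Rightarrow> (real \<times> 'a history) list \<Rightarrow> real" where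
  "tt A x n mu = sum_list (map (\<lambda>(w,hist). w * (1 - sil A x n hist)) mu)"

lemma cost_blk0: "valid_learner A \<Longrightarrow> nn mu \<Longrightarrow> tt A x n mu \<le> cost A (replicate n (x, False)) mu"
  unfolding tt_def cost_def nn_def
proof (induction mu)
  case Nil then show ?case by simp
next
  case (Cons p mu)
  obtain w hist where p: "p = (w, hist)" by (cases p)
  have "w * (1 - sil A x n hist) \<le> w * em A (replicate n (x, False)) hist"
    using Cons.prems em_blk0 p by (intro mult_left_mono) auto
  then show ?case using Cons p by (simp add: add_mono)
qed

lemma cost_blk1: "valid_learner A \<Longrightarrow> nn mu \<Longrightarrow> real n * (wt mu - tt A x n mu) \<le> cost A (replicate n (x, True)) mu"
  unfolding tt_def cost_def nn_def wt_def
proof (induction mu)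
  case Nil then show ?case by simp
next
  case (Cons p mu)
  obtain w hist where p: "p = (w, hist)" by (cases p)
  have "w * (real n * sil A x n hist) \<le> w * em A (replicate n (x, True)) hist"
    using Cons.prems em_blk1 p by (intro mult_left_mono) auto
  then show ?case using Cons p by (simp add: algebra_simps)
qed


lemma ext_path:
  assumes "\<forall>i<length u. al_internal a d (take i u)"
  shows "\<exists>v. is_path (al_internal a d) (u @ v)"
proof (cases "al_internal a d u")
  case False
  then show ?thesis using assms unfolding is_path_def by (intro exI[of _ "[]"]) simp
next
  case True
  then have l: "length u < d" and o: "length (filter id u) < a" unfolding al_internal_def by auto
  define v where "v = replicate (d - length u) False"
  have "\<forall>i<length (u @ v). al_internal a d (take i (u @ v))"
  proof (intro allI impI)
    fix i assume i: "i < length (u @ v)"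
    show "al_internal a d (take i (u @ v))"
    proof (cases "i < length u")
      case True then show ?thesis using assms by simp
    next
      case False
      then have "take i (u @ v) = u @ replicate (i - length u) False"
        using i unfolding v_def by (simp add: take_replicate min_def)
      then show ?thesis using i o l unfolding al_internal_def v_def by simp
    qed
  qed
  moreover have "\<not> al_internal a d (u @ v)" using l unfolding al_internal_def v_def by simp
  ultimately show ?thesis unfolding is_path_def by blast
qed

lemma al_mono: "k \<le> w \<Longrightarrow> m \<le> d \<Longrightarrow> al_internal k m u \<Longrightarrow> al_internal w d u"
  unfolding al_internal_def by auto

lemma shattered_mono:
  assumes "k \<le> w" "m \<le> d" "tree_shattered H (al_internal w d) xt"
  shows "tree_shattered H (al_internal k m) xt"
  unfolding tree_shattered_def
proof (intro allI impI)
  fix \<sigma> assume p: "is_path (al_internal k m) \<sigma>"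
  then have "\<forall>i<length \<sigma>. al_internal w d (take i \<sigma>)"
    using al_mono[OF assms(1,2)] unfolding is_path_def by blast
  then obtain v where "is_path (al_internal w d) (\<sigma> @ v)" using ext_path by blast
  then obtain h where h: "h \<in> H" "\<forall>i<length (\<sigma> @ v). h (xt (take i (\<sigma> @ v))) = (\<sigma> @ v) ! i"
    using assms(3) unfolding tree_shattered_def by blast
  have "\<forall>i<length \<sigma>. h (xt (take i \<sigma>)) = \<sigma> ! i"
  proof (intro allI impI)
    fix i assume "i < length \<sigma>"
    then show "h (xt (take i \<sigma>)) = \<sigma> ! i" using h(2)[rule_format, of i] by (simp add: nth_append)
  qed
  then show "\<exists>h\<in>H. \<forall>i<length \<sigma>. h (xt (take i \<sigma>)) = \<sigma> ! i" using h(1) by blast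
qed

lemma complete_al: "complete_internal d = al_internal d d"
proof
  fix u show "complete_internal d u = al_internal d d u"
    unfolding complete_internal_def al_internal_def
    using length_filter_le[of id u] le_less_trans by blast
qed

lemma enat_Sup_ex:
  assumes "enat n \<le> Sup {enat d | d. P d}" "1 \<le> n"
  shows "\<exists>d\<ge>n. P d"
proof (rule ccontr)
  assume "\<not> (\<exists>d\<ge>n. P d)"
  then have "\<forall>e\<in>{enat d | d. P d}. e \<le> enat (n - 1)"
  proof clarify
    fix d assume "\<not> (\<exists>d\<ge>n. P d)" "P d"
    then have "d < n" by (meson not_le)
    then show "enat d \<le> enat (n - 1)" by simp
  qed
  then have "Sup {enat d | d. P d} \<le> enat (n - 1)" by (intro Sup_least) blast
  with assms(1) have "enat n \<le> enat (n - 1)" by (rule order_trans)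
  with assms(2) show False by simp
qed


lemma run_append: "run A (zs1 @ zs2) mu = run A zs2 (run A zs1 mu)"
proof (induction zs1 arbitrary: mu)
  case Nil then show ?case by simp
next
  case (Cons p zs)
  obtain x y where p: "p = (x,y)" by (cases p)
  show ?case unfolding p using Cons by simp
qed

lemma phases:
  fixes A :: "'a learner" and xt :: "bool list \<Rightarrow> 'a"
  assumes vA: "valid_learner A" and r1: "1 \<le> r"
  shows "nn mu \<Longrightarrow> (\<forall>i<length u. al_internal a d (take i u)) \<Longrightarrow>
    length (filter id u) + k \<le> a \<Longrightarrow> length u + k * r \<le> d \<Longrightarrow>
    \<exists>zs \<sigma> v. is_path (al_internal a d) \<sigma> \<and> \<sigma> = u @ v \<and> length zs \<le> k * r * r \<and>
      (\<forall>p\<in>set zs. \<exists>i<length \<sigma>. fst p = xt (take i \<sigma>) \<and> snd p = \<sigma> ! i) \<and>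
      real k * wt mu * real r / 2 \<le> cost A zs mu"
proof (induction k arbitrary: mu u)
  case 0
  then obtain v where "is_path (al_internal a d) (u @ v)" using ext_path by blast
  then show ?case by (intro exI[of _ "[]"] exI[of _ "u @ v"] exI[of _ v]) simp
next
  case (Suc k)
  define y where "y j = xt (u @ replicate j False)" for j
  define blk where "blk (b::bool) j = replicate r (y j, b)" for b j
  define zer where "zer j = concat (map (blk False) [0..<j])" for j
  define W where "W = wt mu"
  define t where "t j = tt A (y j) r (run A (zer j) mu)" for j
  have nnr: "nn (run A zs mu)" for zs using nn_run[OF vA Suc.prems(1)] .
  have wtr: "wt (run A zs mu) = W" for zs unfolding W_def by (rule wt_run)
  have zer_Suc: "zer (Suc j) = zer j @ blk False j" for j unfolding zer_def by simp
  have len_zer: "length (zer j) = j * r" for j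
    by (induction j) (auto simp: zer_Suc blk_def zer_def)
  have F1: "(\<Sum>i<j. t i) \<le> cost A (zer j) mu" for j
  proof (induction j)
    case 0 then show ?case by (simp add: zer_def)
  next
    case (Suc j)
    have "t j \<le> cost A (blk False j) (run A (zer j) mu)"
      unfolding t_def blk_def by (rule cost_blk0[OF vA nnr])
    then show ?case using Suc by (simp add: zer_Suc cost_append)
  qed
  have set_zer: "p \<in> set (zer j) \<Longrightarrow> \<exists>i<j. p = (y i, False)" for p j
    unfolding zer_def blk_def by (auto simp: set_replicate_conv_if split: if_splits)
  have ones: "length (filter id u) < a" using Suc.prems(3) by (simp add: id_def)
  have intv: "al_internal a d (u @ replicate j False)" if "j < r" for j
    using that Suc.prems(4) ones unfolding al_internal_def by (simp add: algebra_simps)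
  have pre: "\<forall>i<length (u @ replicate j False @ e). al_internal a d (take i (u @ replicate j False @ e))"
    if "j \<le> r" "length e \<le> 1" "j = r \<Longrightarrow> e = []" for j e
  proof (intro allI impI)
    fix i assume i: "i < length (u @ replicate j False @ e)"
    show "al_internal a d (take i (u @ replicate j False @ e))"
    proof (cases "i < length u")
      case True then show ?thesis using Suc.prems(2) by simp
    next
      case False
      then have ij: "i - length u \<le> j" using i that by auto
      have "take i (u @ replicate j False @ e) = u @ replicate (i - length u) False"
        using False ij i that(2) by (auto simp: take_append take_replicate min_def)
      moreover have "i - length u < r" using False ij that i by (cases "j = r") auto
      ultimately show ?thesis using intv by simp
    qed
  qed
  show ?case
  proof (cases "W * real r / 2 \<le> (\<Sum>i<r. t i)")
    case True
    define u' where "u' = u @ replicate r False"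
    have p': "\<forall>i<length u'. al_internal a d (take i u')"
      using pre[of r "[]"] unfolding u'_def by simp
    have l1: "length (filter id u') + k \<le> a" using Suc.prems(3) unfolding u'_def by (simp add: id_def)
    have l2: "length u' + k * r \<le> d" using Suc.prems(4) unfolding u'_def by simp
    obtain zs' \<sigma> v' where IH: "is_path (al_internal a d) \<sigma>" "\<sigma> = u' @ v'" "length zs' \<le> k * r * r"
      "\<forall>p\<in>set zs'. \<exists>i<length \<sigma>. fst p = xt (take i \<sigma>) \<and> snd p = \<sigma> ! i"
      "real k * wt (run A (zer r) mu) * real r / 2 \<le> cost A zs' (run A (zer r) mu)"
      using Suc.IH[OF nnr[of "zer r"] p' l1 l2] by blast
    define zs where "zs = zer r @ zs'"
    have c1: "\<forall>p\<in>set zs. \<exists>i<length \<sigma>. fst p = xt (take i \<sigma>) \<and> snd p = \<sigma> ! i"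
    proof
      fix p assume "p \<in> set zs"
      then consider "p \<in> set (zer r)" | "p \<in> set zs'" unfolding zs_def by auto
      then show "\<exists>i<length \<sigma>. fst p = xt (take i \<sigma>) \<and> snd p = \<sigma> ! i"
      proof cases
        case 1
        then obtain i where i: "i < r" "p = (y i, False)" using set_zer by blast
        have "take (length u + i) \<sigma> = u @ replicate i False"
          using i IH(2) unfolding u'_def by (simp add: take_append take_replicate min_def)
        moreover have "\<sigma> ! (length u + i) = False"
          using i IH(2) unfolding u'_def by (simp add: nth_append)
        moreover have "length u + i < length \<sigma>" using i IH(2) unfolding u'_def by simp
        ultimately show ?thesis using i unfolding y_def by (intro exI[of _ "length u + i"]) simp
      next
        case 2 then show ?thesis using IH(4) by blast
      qed
    qed
    have c2: "length zs \<le> Suc k * r * r" using IH(3) len_zer unfolding zs_def by (simp add: algebra_simps)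
    have c3: "real (Suc k) * wt mu * real r / 2 \<le> cost A zs mu"
    proof -
      have "cost A zs mu = cost A (zer r) mu + cost A zs' (run A (zer r) mu)"
        unfolding zs_def by (rule cost_append)
      moreover have "W * real r / 2 \<le> cost A (zer r) mu" using True F1[of r] by linarith
      ultimately show ?thesis using IH(5) wtr unfolding W_def by (simp add: algebra_simps)
    qed
    have c4: "\<sigma> = u @ (replicate r False @ v')" using IH(2) unfolding u'_def by simp
    show ?thesis
      apply (rule exI[of _ zs], rule exI[of _ \<sigma>], rule exI[of _ "replicate r False @ v'"])
      using IH(1) c1 c2 c3 c4 by blast
  next
    case False
    obtain j where j: "j < r" "t j < W / 2"
    proof (rule ccontr)
      assume "\<not> thesis"
      with that have "\<forall>j<r. W / 2 \<le> t j" by (meson not_le)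
      then have "real (card {..<r}) * (W / 2) \<le> (\<Sum>i<r. t i)"
        by (intro sum_bounded_below) auto
      with False show False by (simp add: algebra_simps)
    qed
    define u' where "u' = u @ replicate j False @ [True]"
    have p': "\<forall>i<length u'. al_internal a d (take i u')"
      using pre[of j "[True]"] j unfolding u'_def by simp
    define pz where "pz = zer j @ blk True j"
    have l1: "length (filter id u') + k \<le> a" using Suc.prems(3) unfolding u'_def by (simp add: id_def)
    have l2: "length u' + k * r \<le> d" using Suc.prems(4) j unfolding u'_def by simp
    obtain zs' \<sigma> v' where IH: "is_path (al_internal a d) \<sigma>" "\<sigma> = u' @ v'" "length zs' \<le> k * r * r"
      "\<forall>p\<in>set zs'. \<exists>i<length \<sigma>. fst p = xt (take i \<sigma>) \<and> snd p = \<sigma> ! i"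
      "real k * wt (run A pz mu) * real r / 2 \<le> cost A zs' (run A pz mu)"
      using Suc.IH[OF nnr[of pz] p' l1 l2] by blast
    define zs where "zs = pz @ zs'"
    have c1: "\<forall>p\<in>set zs. \<exists>i<length \<sigma>. fst p = xt (take i \<sigma>) \<and> snd p = \<sigma> ! i"
    proof
      fix p assume "p \<in> set zs"
      then consider "p \<in> set (zer j)" | "p \<in> set (blk True j)" | "p \<in> set zs'"
        unfolding zs_def pz_def by auto
      then show "\<exists>i<length \<sigma>. fst p = xt (take i \<sigma>) \<and> snd p = \<sigma> ! i"
      proof cases
        case 1
        then obtain i where i: "i < j" "p = (y i, False)" using set_zer by blast
        have "take (length u + i) \<sigma> = u @ replicate i False"
          using i IH(2) unfolding u'_def by (simp add: take_append take_replicate min_def)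
        moreover have "\<sigma> ! (length u + i) = False"
          using i IH(2) unfolding u'_def by (simp add: nth_append)
        moreover have "length u + i < length \<sigma>" using i IH(2) unfolding u'_def by simp
        ultimately show ?thesis using i unfolding y_def by (intro exI[of _ "length u + i"]) simp
      next
        case 2
        then have pp: "p = (y j, True)" unfolding blk_def by (simp add: set_replicate_conv_if split: if_splits)
        have "take (length u + j) \<sigma> = u @ replicate j False"
          using IH(2) unfolding u'_def by (simp add: take_append)
        moreover have "\<sigma> ! (length u + j) = True"
          using IH(2) unfolding u'_def by (simp add: nth_append)
        moreover have "length u + j < length \<sigma>" using IH(2) unfolding u'_def by simp
        ultimately show ?thesis using pp unfolding y_def by (intro exI[of _ "length u + j"]) simp
      next
        case 3 then show ?thesis using IH(4) by blast
      qed
    qed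
    have c2: "length zs \<le> Suc k * r * r"
    proof -
      have "length pz = Suc j * r" unfolding pz_def using len_zer by (simp add: blk_def)
      also have "\<dots> \<le> r * r" using j by (metis Suc_leI mult_le_mono1)
      finally show ?thesis using IH(3) unfolding zs_def by (simp add: algebra_simps)
    qed
    have c3: "real (Suc k) * wt mu * real r / 2 \<le> cost A zs mu"
    proof -
      have "cost A zs mu = cost A (zer j) mu + cost A (blk True j) (run A (zer j) mu) + cost A zs' (run A pz mu)"
        unfolding zs_def pz_def by (simp add: cost_append run_append)
      moreover have "0 \<le> cost A (zer j) mu" by (rule cost_nonneg[OF vA Suc.prems(1)])
      moreover have "real r * (W - t j) \<le> cost A (blk True j) (run A (zer j) mu)"
        using cost_blk1[OF vA nnr[of "zer j"], of r "y j"] wtr unfolding t_def blk_def by simp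
      moreover have "W * real r / 2 \<le> real r * (W - t j)"
      proof -
        have "W / 2 \<le> W - t j" using j by simp
        then have "real r * (W / 2) \<le> real r * (W - t j)" by (intro mult_left_mono) auto
        then show ?thesis by (simp add: algebra_simps)
      qed
      ultimately show ?thesis using IH(5) wtr unfolding W_def by (simp add: algebra_simps)
    qed
    have c4: "\<sigma> = u @ (replicate j False @ [True] @ v')" using IH(2) unfolding u'_def by simp
    show ?thesis
      apply (rule exI[of _ zs], rule exI[of _ \<sigma>], rule exI[of _ "replicate j False @ [True] @ v'"])
      using IH(1) c1 c2 c3 c4 by blast
  qed
qed


lemma core:
  assumes vA: "valid_learner A" and sh: "tree_shattered H (al_internal a d) xt"
    and a1: "1 \<le> a" and ad: "a \<le> d" and dT: "d \<le> T"
  shows "\<exists>h\<in>H. \<exists>xs. length xs = T \<and> sqrt (real a * real d) / 8 \<le> exp_mistakes A h xs []"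
proof -
  define S where "S = {r. a * r * r \<le> d}"
  have fin: "finite S"
  proof (rule finite_subset)
    show "S \<subseteq> {..d}"
    proof
      fix r assume "r \<in> S"
      then have "a * (r * r) \<le> d" unfolding S_def by (simp add: mult.assoc)
      moreover have "r \<le> r * r" by (rule le_square)
      moreover have "r * r \<le> a * (r * r)" using mult_le_mono1[OF a1, of "r*r"] by simp
      ultimately have "r \<le> d" by linarith
      then show "r \<in> {..d}" by simp
    qed
  qed simp
  have oneS: "1 \<in> S" using ad unfolding S_def by simp
  define r where "r = Max S"
  have rS: "r \<in> S" unfolding r_def using fin oneS by (intro Max_in) auto
  have r1: "1 \<le> r" unfolding r_def using fin oneS by (simp add: Max_ge_iff)
  have rd: "a * r * r \<le> d" using rS unfolding S_def by simp
  have "Suc r \<notin> S"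
  proof
    assume "Suc r \<in> S"
    then have "Suc r \<le> r" unfolding r_def by (rule Max_ge[OF fin])
    then show False by simp
  qed
  then have dr: "d < a * (r + 1) * (r + 1)" unfolding S_def by simp
  have nn1: "nn [(1::real, [] :: 'a history)]" unfolding nn_def by simp
  have ar: "a * r \<le> d" using rd r1 by (metis le_trans mult_le_mono2 nat_mult_1_right)
  obtain zs \<sigma> v where P: "is_path (al_internal a d) \<sigma>" "\<sigma> = [] @ v" "length zs \<le> a * r * r"
    "\<forall>p\<in>set zs. \<exists>i<length \<sigma>. fst p = xt (take i \<sigma>) \<and> snd p = \<sigma> ! i"
    "real a * wt [(1::real, [] :: 'a history)] * real r / 2 \<le> cost A zs [(1, [])]"
    using phases[OF vA r1 nn1, of "[]" a d a xt] ar by auto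
  obtain h where h: "h \<in> H" "\<forall>i<length \<sigma>. h (xt (take i \<sigma>)) = \<sigma> ! i"
    using sh P(1) unfolding tree_shattered_def by blast
  have hz: "\<forall>p\<in>set zs. h (fst p) = snd p" using P(4) h(2) by fastforce
  have mz: "map (\<lambda>x. (x, h x)) (map fst zs) = zs"
    unfolding map_map by (rule map_idI) (use hz in auto)
  define xs where "xs = map fst zs @ replicate (T - length zs) undefined"
  have lx: "length xs = T" unfolding xs_def using P(3) rd dT by simp
  have "em A zs [] \<le> em A (zs @ map (\<lambda>x. (x, h x)) (replicate (T - length zs) undefined)) []"
    by (rule em_append_ge[OF vA])
  also have "\<dots> = exp_mistakes A h xs []" unfolding xs_def exp_em using mz by simp
  finally have e1: "em A zs [] \<le> exp_mistakes A h xs []" .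
  have e2: "real a * real r / 2 \<le> em A zs []" using P(5) unfolding cost_def wt_def by simp
  have "a * d \<le> (4 * a * r) ^ 2"
  proof -
    have "(r + 1) * (r + 1) \<le> (2 * r) * (2 * r)" using r1 by (intro mult_le_mono) auto
    then have "a * ((r + 1) * (r + 1)) \<le> a * ((2 * r) * (2 * r))" by (rule mult_le_mono2)
    then have "d \<le> 4 * a * r * r" using dr by (simp add: algebra_simps)
    then have "a * d \<le> a * (4 * a * r * r)" by (rule mult_le_mono2)
    also have "\<dots> \<le> (4 * a * r) ^ 2" by (simp add: power2_eq_square algebra_simps)
    finally show ?thesis .
  qed
  then have "real a * real d \<le> (real (4 * a * r)) ^ 2" by (metis of_nat_le_iff of_nat_mult of_nat_power)
  then have "sqrt (real a * real d) \<le> real (4 * a * r)"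
    using real_sqrt_le_mono by fastforce
  then have "sqrt (real a * real d) / 8 \<le> real a * real r / 2" by simp
  then have "sqrt (real a * real d) / 8 \<le> exp_mistakes A h xs []" using e1 e2 by linarith
  then show ?thesis using h(1) lx by blast
qed

lemma mb_ge:
  assumes vA: "valid_learner A" and "h \<in> H" "length xs = T"
  shows "exp_mistakes A h xs [] \<le> mistake_bound A T H"
  unfolding mistake_bound_def
proof (rule cSup_upper)
  show "exp_mistakes A h xs [] \<in> insert 0 {exp_mistakes A h xs [] |h xs. h \<in> H \<and> length xs = T}"
    using assms by blast
  show "bdd_above (insert 0 {exp_mistakes A h xs [] |h xs. h \<in> H \<and> length xs = T})"
    unfolding bdd_above_def
  proof (intro exI[of _ "real T"] ballI)
    fix z assume "z \<in> insert 0 {exp_mistakes A h xs [] |h xs. h \<in> H \<and> length xs = T}"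
    then show "z \<le> real T" by (auto simp: exp_em) (metis em_le[OF vA] length_map)
  qed
qed

lemma mb_nonneg:
  assumes vA: "valid_learner A"
  shows "0 \<le> mistake_bound A T H"
  unfolding mistake_bound_def
proof (rule cSup_upper)
  show "0 \<in> insert 0 {exp_mistakes A h xs [] |h xs. h \<in> H \<and> length xs = T}" by blast
  show "bdd_above (insert 0 {exp_mistakes A h xs [] |h xs. h \<in> H \<and> length xs = T})"
    unfolding bdd_above_def
  proof (intro exI[of _ "real T"] ballI)
    fix z assume "z \<in> insert 0 {exp_mistakes A h xs [] |h xs. h \<in> H \<and> length xs = T}"
    then show "z \<le> real T" by (auto simp: exp_em) (metis em_le[OF vA] length_map)
  qed
qed

lemma per_w:
  fixes H :: "('a \<Rightarrow> bool) set"
  assumes vA: "valid_learner A"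
  shows "sqrt (real (the_enat (min (enat w) (min (littlestone_dim H) (enat T))))
              * real (the_enat (min (AL_dim w H) (enat T)))) \<le> 8 * mistake_bound A T H"
proof -
  define K where "K = min (enat w) (min (littlestone_dim H) (enat T))"
  define M where "M = min (AL_dim w H) (enat T)"
  obtain k where kK: "K = enat k"
  proof (cases K)
    case (enat n) then show ?thesis using that by blast
  next
    case infinity then have False unfolding K_def by (simp add: min_def split: if_splits)
    then show ?thesis ..
  qed
  obtain m where mM: "M = enat m"
  proof (cases M)
    case (enat n) then show ?thesis using that by blast
  next
    case infinity then have False unfolding M_def by (simp add: min_def split: if_splits)
    then show ?thesis ..
  qed
  have "K \<le> enat w" "K \<le> littlestone_dim H" "K \<le> enat T" unfolding K_def by (auto intro: min.coboundedI2)
  then have kw: "k \<le> w" and kL: "enat k \<le> littlestone_dim H" and kT: "k \<le> T"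
    using kK by auto
  have "M \<le> AL_dim w H" "M \<le> enat T" unfolding M_def by auto
  then have mA: "enat m \<le> AL_dim w H" and mT: "m \<le> T"
    using mM by auto
  have goal: "sqrt (real k * real m) \<le> 8 * mistake_bound A T H"
  proof (cases "k = 0")
    case True then show ?thesis using mb_nonneg[OF vA] by simp
  next
    case False
    then have k1: "1 \<le> k" by simp
    show ?thesis
    proof (cases "k \<le> m")
      case True
      then have m1: "1 \<le> m" using k1 by simp
      obtain d' where d': "d' \<ge> m" "\<exists>xt. tree_shattered H (al_internal w d') xt"
        using enat_Sup_ex[OF mA[unfolded AL_dim_def] m1] by blast
      then obtain xt where "tree_shattered H (al_internal w d') xt" by blast
      then have "tree_shattered H (al_internal k m) xt" using shattered_mono kw d'(1) by blast
      then obtain h xs where hx: "h \<in> H" "length xs = T" "sqrt (real k * real m) / 8 \<le> exp_mistakes A h xs []"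
        using core[OF vA _ k1 True mT] by blast
      then show ?thesis using mb_ge[OF vA hx(1,2)] by simp
    next
      case False
      obtain d' where d': "d' \<ge> k" "\<exists>xt. tree_shattered H (complete_internal d') xt"
        using enat_Sup_ex[OF kL[unfolded littlestone_dim_def] k1] by blast
      then obtain xt where "tree_shattered H (al_internal d' d') xt" unfolding complete_al by blast
      then have "tree_shattered H (al_internal k k) xt" using shattered_mono d'(1) by blast
      then obtain h xs where hx: "h \<in> H" "length xs = T" "sqrt (real k * real k) / 8 \<le> exp_mistakes A h xs []"
        using core[OF vA _ k1 _ kT] by blast
      moreover have "sqrt (real k * real m) \<le> sqrt (real k * real k)"
        using False by (intro real_sqrt_le_mono mult_left_mono) auto
      ultimately show ?thesis using mb_ge[OF vA hx(1,2)] by simp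
    qed
  qed
  then show ?thesis unfolding K_def[symmetric] M_def[symmetric] kK mM by simp
qed

theorem lemma5:
  fixes H :: "('a \<Rightarrow> bool) set" and T :: nat
  shows "Inf {mistake_bound A T H | A. valid_learner A}
    \<ge> (1/8) * (SUP w\<in>{1::nat..}.
          sqrt (real (the_enat (min (enat w) (min (littlestone_dim H) (enat T))))
              * real (the_enat (min (AL_dim w H) (enat T)))))"
proof -
  have v0: "valid_learner (\<lambda>_ _. 0)" unfolding valid_learner_def by simp
  show ?thesis
  proof (rule cInf_greatest)
    show "{mistake_bound A T H | A. valid_learner A} \<noteq> {}" using v0 by blast
  next
    fix z assume "z \<in> {mistake_bound A T H | A. valid_learner A}"
    then obtain A where vA: "valid_learner A" and z: "z = mistake_bound A T H" by blast
    have "(SUP w\<in>{1::nat..}.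
          sqrt (real (the_enat (min (enat w) (min (littlestone_dim H) (enat T))))
              * real (the_enat (min (AL_dim w H) (enat T))))) \<le> 8 * mistake_bound A T H"
      by (rule cSUP_least) (auto intro: per_w[OF vA])
    then show "(1/8) * (SUP w\<in>{1::nat..}.
          sqrt (real (the_enat (min (enat w) (min (littlestone_dim H) (enat T))))
              * real (the_enat (min (AL_dim w H) (enat T))))) \<le> z"
      unfolding z by simp
  qed
qed

end
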